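(* Let $\beta\in\mathbb{D}$ and $p\in\mathbb{D}$, and let $s=\beta+\bar\beta p$ (so that $(s,p)\in\mathbb{G}$). Then $$\kappa(s,p):=\sup_{z\in\mathbb{D}}\frac{1-|z|^2}{|1-sz+pz^2|}=\left|1-\frac{\tfrac12 s\bar\beta}{1+\sqrt{1-|\beta|^2}}\right|^{-1},$$ and the supremum is attained at exactly one point of $\mathbb{D}$, namely $z=\dfrac{\bar\beta}{1+\sqrt{1-|\beta|^2}}$.
   Context: $\mathbb{D}$ is the open unit disc and $\mathbb{G}=\{(z+w,zw):|z|<1,|w|<1\}$ is the symmetrised bidisc. (For $(s,p)\in\mathbb{G}$ one has $\beta=(s-\bar s p)/(1-|p|^2)$.) *)

theory Defs
  imports "HOL-Analysis.Analysis"
begin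

definition kappa_fun :: "complex \<Rightarrow> complex \<Rightarrow> complex \<Rightarrow> real" where
  "kappa_fun s p z = (1 - (cmod z)\<^sup>2) / cmod (1 - s * z + p * z\<^sup>2)"

definition kappa :: "complex \<Rightarrow> complex \<Rightarrow> real" where
  "kappa s p = (SUP z \<in> ball 0 1. kappa_fun s p z)"

end

theory Submission
  imports Defs
begin

lemma mob: fixes a z :: complex
  shows "(cmod (1 - cnj a * z))^2 - (cmod (a - z))^2 = (1 - (cmod a)^2)*(1 - (cmod z)^2)"
  unfolding cmod_power2 by (simp add: algebra_simps power2_eq_square)

lemma key: fixes a c R s p z :: complex
  assumes "a*c*(1+R) = 1 - R" "s = (1+R)*(c + a*p)"
  shows "(1 - s*z + p*z^2)*(1-c*a)^2 = R*((1-p*a^2)*(1-c*z)^2 - (c^2-p)*(a-z)^2)"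
  using assms by algebra

lemma half: fixes a c R s p :: complex
  assumes "a*c*(1+R) = 1 - R" "s = (1+R)*(c + a*p)"
  shows "1 - s*a/2 = (1+R)*(1-p*a^2)/2"
  using assms by algebra

lemma core:
  fixes a p s :: complex and r :: real
  assumes r: "r > 0" and a: "cmod a < 1" and p: "cmod p < 1"
    and rel: "(cmod a)^2 * (1 + r) = 1 - r"
    and sdef: "s = (1 + of_real r) * (cnj a + a * p)"
  shows "kappa_fun s p a = inverse (cmod (1 - s*a/2))"
    and "\<And>z. cmod z < 1 \<Longrightarrow> kappa_fun s p z \<le> kappa_fun s p a"
    and "\<And>z. cmod z < 1 \<Longrightarrow> z \<noteq> a \<Longrightarrow> kappa_fun s p z < kappa_fun s p a"
proof -
  define R where "R = complex_of_real r"
  define c where "c = cnj a"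
  define A where "A = 1 - p*a^2"
  define B where "B = c^2 - p"
  have ca: "c * a = of_real ((cmod a)^2)"
    unfolding c_def by (metis complex_norm_square mult.commute)
  have crel: "a*c*(1+R) = 1 - R"
  proof -
    have "a*c*(1+R) = of_real ((cmod a)^2 * (1 + r))" using ca by (simp add: R_def mult.commute)
    also have "\<dots> = 1 - R" using rel by (simp add: R_def)
    finally show ?thesis .
  qed
  have s2: "s = (1+R)*(c + a*p)" using sdef by (simp add: R_def c_def)
  have a2: "(cmod a)^2 < 1" using a by (simp add: power_less_one_iff abs_less_iff) 
  have hca: "cmod (1 - c*a) = 1 - (cmod a)^2"
  proof -
    have "1 - c*a = of_real (1 - (cmod a)^2)" using ca by simp
    then have "cmod (1 - c*a) = \<bar>1 - (cmod a)^2\<bar>" by (metis norm_of_real)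
    then show ?thesis using a2 by simp
  qed
  have hAB: "cmod B < cmod A"
  proof -
    have m: "(cmod (1 - cnj (cnj p) * a^2))^2 - (cmod (cnj p - a^2))^2
        = (1 - (cmod (cnj p))^2)*(1 - (cmod (a^2))^2)" by (rule mob)
    have "(cmod (a^2))^2 < 1" using a2 by (simp add: norm_power power_less_one_iff)
    moreover have "(cmod (cnj p))^2 < 1" using p by (simp add: power_less_one_iff)
    ultimately have "0 < (1 - (cmod (cnj p))^2)*(1 - (cmod (a^2))^2)" by simp
    with m have "(cmod (cnj p - a^2))^2 < (cmod A)^2" by (simp add: A_def)
    moreover have "cmod B = cmod (cnj p - a^2)"
    proof -
      have "B = cnj (a^2 - cnj p)" by (simp add: B_def c_def)
      then have "cmod B = cmod (a^2 - cnj p)" by (metis complex_mod_cnj)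
      also have "\<dots> = cmod (cnj p - a^2)" by (rule norm_minus_commute)
      finally show ?thesis .
    qed
    ultimately show ?thesis by (simp add: power_less_imp_less_base)
  qed
  have Apos: "cmod A > 0" using hAB norm_ge_zero by (meson le_less_trans)
  have gen: "kappa_fun s p z = (1 - (cmod z)^2) * (1 - (cmod a)^2)^2
        / (r * cmod (A*(1-c*z)^2 - B*(a-z)^2))" for z
  proof -
    have "(1 - s*z + p*z^2)*(1-c*a)^2 = R*(A*(1-c*z)^2 - B*(a-z)^2)"
      unfolding A_def B_def by (rule key[OF crel s2])
    then have "cmod (1 - s*z + p*z^2) * (1 - (cmod a)^2)^2 = r * cmod (A*(1-c*z)^2 - B*(a-z)^2)"
      using hca r by (metis R_def norm_mult norm_power norm_of_real abs_of_pos)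
    moreover have "(1 - (cmod a)^2)^2 \<noteq> 0" using a2 by simp
    ultimately show ?thesis unfolding kappa_fun_def
      by (metis (no_types, lifting) mult.commute mult_divide_mult_cancel_left)
  qed
  have fa: "kappa_fun s p a = (1 - (cmod a)^2) / (r * cmod A)"
  proof -
    have "cmod (A*(1-c*a)^2 - B*(a-a)^2) = cmod A * (1 - (cmod a)^2)^2"
      using hca by (simp add: norm_mult norm_power)
    then have "kappa_fun s p a = ((1 - (cmod a)^2) * (1 - (cmod a)^2)^2) / (r * (cmod A * (1 - (cmod a)^2)^2))"
      using gen[of a] by simp
    also have "\<dots> = ((1 - (cmod a)^2)^2 * (1 - (cmod a)^2)) / ((1 - (cmod a)^2)^2 * (r * cmod A))"
      by (simp add: ac_simps)
    also have "\<dots> = (1 - (cmod a)^2) / (r * cmod A)"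
      using a2 by (subst mult_divide_mult_cancel_left) auto
    finally show ?thesis .
  qed
  show "kappa_fun s p a = inverse (cmod (1 - s*a/2))"
  proof -
    have "cmod (1 - s*a/2) = (1 + r) * cmod A / 2"
    proof -
      have "1 - s*a/2 = (1 + of_real r) * A / 2" using half[OF crel s2] by (simp add: A_def R_def)
      also have "(1 + of_real r) = (of_real (1 + r) :: complex)" by simp
      finally have "1 - s*a/2 = of_real (1 + r) * A / 2" .
      then have "cmod (1 - s*a/2) = cmod (of_real (1 + r) * A) / cmod (2::complex)"
        by (simp only: norm_divide)
      also have "\<dots> = \<bar>1 + r\<bar> * cmod A / 2" by (simp only: norm_mult norm_of_real) simp
      finally show ?thesis using r by simp
    qed
    moreover have "1 - (cmod a)^2 = 2*r/(1+r)" using rel r by (simp add: field_simps)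
    ultimately have n: "cmod (1 - s*a/2) = (1 + r) * cmod A / 2"
      and k: "kappa_fun s p a = (2*r/(1+r)) / (r * cmod A)" using fa by simp_all
    have "(2*r/(1+r)) / (r * cmod A) = inverse ((1 + r) * cmod A / 2)"
    proof -
      have h1: "1 + r \<noteq> 0" "r \<noteq> 0" "cmod A \<noteq> 0" using r Apos by auto
      show ?thesis using h1 by (simp add: divide_simps)
    qed
    then show ?thesis using n k by (simp only:)
  qed
  have main: "(1 - (cmod z)^2) * (1 - (cmod a)^2) * cmod A \<le> cmod (A*(1-c*z)^2 - B*(a-z)^2)
     \<and> (z \<noteq> a \<longrightarrow> (1 - (cmod z)^2) * (1 - (cmod a)^2) * cmod A < cmod (A*(1-c*z)^2 - B*(a-z)^2))"
     if z: "cmod z < 1" for z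
  proof -
    define d where "d = (cmod (1 - c*z))^2"
    define e where "e = (cmod (a - z))^2"
    have de: "(1 - (cmod z)^2) * (1 - (cmod a)^2) = d - e"
      using mob[of a z] unfolding d_def e_def c_def by simp
    have tri: "cmod A * d - cmod B * e \<le> cmod (A*(1-c*z)^2 - B*(a-z)^2)"
      using norm_triangle_ineq2[of "A*(1-c*z)^2" "B*(a-z)^2"]
      by (simp add: d_def e_def norm_mult norm_power)
    have e0: "e \<ge> 0" by (simp add: e_def)
    have "cmod B * e \<le> cmod A * e" using hAB e0 by (simp add: mult_right_mono)
    moreover have "z \<noteq> a \<Longrightarrow> cmod B * e < cmod A * e"
      using hAB by (simp add: e_def)
    ultimately have "(d - e) * cmod A \<le> cmod (A*(1-c*z)^2 - B*(a-z)^2)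
       \<and> (z \<noteq> a \<longrightarrow> (d - e) * cmod A < cmod (A*(1-c*z)^2 - B*(a-z)^2))"
      using tri by (auto simp: right_diff_distrib mult.commute)
    then show ?thesis unfolding de .
  qed
  have cmp: "kappa_fun s p z \<le> kappa_fun s p a \<longleftrightarrow>
       (1 - (cmod z)^2) * (1 - (cmod a)^2) * cmod A \<le> cmod (A*(1-c*z)^2 - B*(a-z)^2)"
    and cmp2: "kappa_fun s p z < kappa_fun s p a \<longleftrightarrow>
       (1 - (cmod z)^2) * (1 - (cmod a)^2) * cmod A < cmod (A*(1-c*z)^2 - B*(a-z)^2)"
    if z: "cmod z < 1" for z
  proof -
    define X where "X = cmod (A*(1-c*z)^2 - B*(a-z)^2)"
    have z2: "(cmod z)^2 < 1" using z by (simp add: power_less_one_iff)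
    have "0 < (1 - (cmod z)^2) * (1 - (cmod a)^2) * cmod A" using z2 a2 Apos by simp
    then have Xpos: "X > 0" using main[OF z] unfolding X_def by linarith
    have k: "kappa_fun s p z = (1 - (cmod z)^2) * (1 - (cmod a)^2)^2 / (r * X)"
      using gen unfolding X_def by simp
    have "(1 - (cmod z)^2) * (1 - (cmod a)^2)^2 / (r * X) \<le> (1 - (cmod a)^2) / (r * cmod A)
       \<longleftrightarrow> (1 - (cmod z)^2) * (1 - (cmod a)^2)^2 * (r * cmod A) \<le> (1 - (cmod a)^2) * (r * X)"
      using Xpos Apos r by (simp add: field_simps)
    also have "\<dots> \<longleftrightarrow> ((1 - (cmod z)^2) * (1 - (cmod a)^2) * cmod A) * ((1 - (cmod a)^2) * r) \<le> X * ((1 - (cmod a)^2) * r)"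
      by (simp add: algebra_simps power2_eq_square)
    also have "\<dots> \<longleftrightarrow> (1 - (cmod z)^2) * (1 - (cmod a)^2) * cmod A \<le> X"
      using a2 r by (intro mult_le_cancel_right_pos) simp
    finally show "kappa_fun s p z \<le> kappa_fun s p a \<longleftrightarrow>
       (1 - (cmod z)^2) * (1 - (cmod a)^2) * cmod A \<le> cmod (A*(1-c*z)^2 - B*(a-z)^2)"
      using k fa X_def by simp
    have "(1 - (cmod z)^2) * (1 - (cmod a)^2)^2 / (r * X) < (1 - (cmod a)^2) / (r * cmod A)
       \<longleftrightarrow> (1 - (cmod z)^2) * (1 - (cmod a)^2)^2 * (r * cmod A) < (1 - (cmod a)^2) * (r * X)"
      using Xpos Apos r by (simp add: field_simps)
    also have "\<dots> \<longleftrightarrow> ((1 - (cmod z)^2) * (1 - (cmod a)^2) * cmod A) * ((1 - (cmod a)^2) * r) < X * ((1 - (cmod a)^2) * r)"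
      by (simp add: algebra_simps power2_eq_square)
    also have "\<dots> \<longleftrightarrow> (1 - (cmod z)^2) * (1 - (cmod a)^2) * cmod A < X"
      using a2 r by (intro mult_less_cancel_right_pos) simp
    finally show "kappa_fun s p z < kappa_fun s p a \<longleftrightarrow>
       (1 - (cmod z)^2) * (1 - (cmod a)^2) * cmod A < cmod (A*(1-c*z)^2 - B*(a-z)^2)"
      using k fa X_def by simp
  qed
  show "\<And>z. cmod z < 1 \<Longrightarrow> kappa_fun s p z \<le> kappa_fun s p a"
    using cmp main by blast
  show "\<And>z. cmod z < 1 \<Longrightarrow> z \<noteq> a \<Longrightarrow> kappa_fun s p z < kappa_fun s p a"
    using cmp2 main by blast
qed
theorem proposition4p2:
  fixes \<beta> p s :: complex
  assumes "\<beta> \<in> ball 0 1" and "p \<in> ball 0 1"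
    and "s = \<beta> + cnj \<beta> * p"
  shows "kappa s p
           = inverse (cmod (1 - (s * cnj \<beta> / 2) / (1 + complex_of_real (sqrt (1 - (cmod \<beta>)\<^sup>2)))))
         \<and> {z \<in> ball 0 1. kappa_fun s p z = kappa s p}
           = {cnj \<beta> / (1 + complex_of_real (sqrt (1 - (cmod \<beta>)\<^sup>2)))}"
proof -
  define r where "r = sqrt (1 - (cmod \<beta>)\<^sup>2)"
  define a where "a = cnj \<beta> / (1 + complex_of_real r)"
  have b1: "cmod \<beta> < 1" and p1: "cmod p < 1" using assms by auto
  have b2: "(cmod \<beta>)^2 < 1" using b1 by (simp add: power_less_one_iff)
  have r0: "r > 0" unfolding r_def using b2 by simp
  have r2: "r^2 = 1 - (cmod \<beta>)^2" unfolding r_def using b2 by simp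
  have ne: "1 + complex_of_real r \<noteq> 0"
  proof
    assume "1 + complex_of_real r = 0"
    then have "complex_of_real (1 + r) = 0" by simp
    then show False using r0 by (simp only: of_real_eq_0_iff)
  qed
  have na: "cmod a = cmod \<beta> / (1 + r)"
  proof -
    have "cmod a = cmod \<beta> / cmod (complex_of_real (1 + r))" unfolding a_def by (simp add: norm_divide)
    then show ?thesis using r0 by (simp only: norm_of_real)
  qed
  have a1: "cmod a < 1" using na b1 r0 by (simp add: divide_less_eq)
  have rel: "(cmod a)^2 * (1 + r) = 1 - r"
  proof -
    have "(cmod a)^2 * (1 + r) = (cmod \<beta>)^2 / (1 + r)" using na r0 by (simp add: power2_eq_square field_simps)
    also have "\<dots> = (1 - r^2) / (1 + r)" using r2 by simp
    also have "\<dots> = 1 - r" using r0 by (simp add: power2_eq_square field_simps)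
    finally show ?thesis .
  qed
  have ca: "cnj a = \<beta> / (1 + complex_of_real r)" unfolding a_def by simp
  have sdef: "s = (1 + of_real r) * (cnj a + a * p)"
  proof -
    have e1: "(1 + of_real r) * cnj a = \<beta>" using ne unfolding ca by simp
    have e2: "(1 + of_real r) * a = cnj \<beta>" using ne unfolding a_def by simp
    have "(1 + of_real r) * (cnj a + a * p) = (1 + of_real r) * cnj a + ((1 + of_real r) * a) * p"
      by (simp add: algebra_simps)
    then show ?thesis using e1 e2 assms(3) by simp
  qed
  have tgt: "(s * cnj \<beta> / 2) / (1 + complex_of_real r) = s * a / 2"
    unfolding a_def by simp
  note C = core[OF r0 a1 p1 rel sdef]
  have ain: "a \<in> ball 0 1" using a1 by simp
  have K: "kappa s p = kappa_fun s p a"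
    unfolding kappa_def
    by (rule cSup_eq_maximum) (use ain C(2) in auto)
  have S: "{z \<in> ball 0 1. kappa_fun s p z = kappa s p} = {a}"
    using C(3) ain K by fastforce
  have T: "1 - (s * cnj \<beta> / 2) / (1 + complex_of_real r) = 1 - s*a/2" using tgt by (simp only:)
  show ?thesis unfolding r_def[symmetric] T a_def[symmetric] using K S C(1) by simp
qed
end
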